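(* Consider an instance of the Profile Matching Problem (as defined in the context), with metric $d$ equal to either the Hamming distance $d_h$ or the Weighted Hamming distance $d_w$. Let $\mu_1$ and $\mu_2$ be two stable matchings for this instance. Then $d\bigl(x,\mu_1(x)\bigr)=d\bigl(x,\mu_2(x)\bigr)$ for every participant $x\in\mathcal{M}\cup\mathcal{W}$.
   Context: Profile Matching Problem: there is a set $\mathcal{M}$ of $n$ men and a set $\mathcal{W}$ of $n$ women, and an integer $k\ge 1$. Each participant $x\in\mathcal{M}\cup\mathcal{W}$ has a profile $\mathbf{a}(x)=(a_1(x),\dots,a_k(x))\in Q_k=\{0,1\}^k$. Two metrics on $Q_k$ are considered: the Hamming distance $d_h(\mathbf{a},\mathbf{a}')=\sum_{i=1}^k\mathbf{1}(a_i\neq a_i')$ and the Weighted Hamming distance $d_w(\mathbf{a},\mathbf{a}')=\sum_{i=1}^k 2^{-i}\mathbf{1}(a_i\neq a_i')$. For participants $x,y$ write $d(x,y)=d(\mathbf{a}(x),\mathbf{a}(y))$. Each participant $x$ has a tie-breaking list $T_x$, a strict total order on the members of the opposite sex. The strict preference list $P_x$ of $x$ ranks the members of the opposite sex in increasing order of $d(x,\cdot)$, and members at equal distance from $x$ are ordered according to $T_x$; write $y\succ_x y'$ if $x$ ranks $y$ above $y'$ in $P_x$. A matching is a map $\mu$ from $\mathcal{M}\cup\mathcal{W}$ to itself with $\mu(m)\in\mathcal{W}\cup\{m\}$ for men, $\mu(w)\in\mathcal{M}\cup\{w\}$ for women, and $\mu(m)=w\iff\mu(w)=m$. A pair $(m,w)$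 is blocking for $\mu$ if $w\succ_m\mu(m)$ and $m\succ_w\mu(w)$; $\mu$ is stable if it has no blocking pair. *)

theory Defs
  imports Complex_Main
begin

text \<open>Profiles in Q_k are modelled as functions nat => bool; only coordinates 1..k matter.\<close>

definition hamming_dist :: "nat \<Rightarrow> (nat \<Rightarrow> bool) \<Rightarrow> (nat \<Rightarrow> bool) \<Rightarrow> real" where
  "hamming_dist k a b = (\<Sum>i=1..k. if a i \<noteq> b i then 1 else 0)"

definition weighted_hamming_dist :: "nat \<Rightarrow> (nat \<Rightarrow> bool) \<Rightarrow> (nat \<Rightarrow> bool) \<Rightarrow> real" where
  "weighted_hamming_dist k a b = (\<Sum>i=1..k. if a i \<noteq> b i then (1/2) ^ i else 0)"

definition opposite :: "'p set \<Rightarrow> 'p set \<Rightarrow> 'p \<Rightarrow> 'p set" where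
  "opposite M W x = (if x \<in> M then W else M)"

definition ranks_above ::
  "('q \<Rightarrow> 'q \<Rightarrow> real) \<Rightarrow> ('p \<Rightarrow> 'q) \<Rightarrow> ('p \<Rightarrow> 'p rel) \<Rightarrow> 'p \<Rightarrow> 'p \<Rightarrow> 'p \<Rightarrow> bool" where
  "ranks_above d a T x y y' \<longleftrightarrow>
     d (a x) (a y) < d (a x) (a y') \<or> (d (a x) (a y) = d (a x) (a y') \<and> (y, y') \<in> T x)"

text \<open>x prefers y (of the opposite sex) to its current status z = mu x; being unmatched
  (z = x) is worse than being matched to any member of the opposite sex.\<close>
definition prefers ::
  "'p set \<Rightarrow> 'p set \<Rightarrow> ('q \<Rightarrow> 'q \<Rightarrow> real) \<Rightarrow> ('p \<Rightarrow> 'q) \<Rightarrow> ('p \<Rightarrow> 'p rel) \<Rightarrow> 'p \<Rightarrow> 'p \<Rightarrow> 'p \<Rightarrow> bool" where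
  "prefers M W d a T x y z \<longleftrightarrow>
     y \<in> opposite M W x \<and> (z = x \<or> (z \<in> opposite M W x \<and> ranks_above d a T x y z))"

definition is_matching :: "'p set \<Rightarrow> 'p set \<Rightarrow> ('p \<Rightarrow> 'p) \<Rightarrow> bool" where
  "is_matching M W mu \<longleftrightarrow>
     (\<forall>m\<in>M. mu m \<in> W \<union> {m}) \<and> (\<forall>w\<in>W. mu w \<in> M \<union> {w}) \<and>
     (\<forall>m\<in>M. \<forall>w\<in>W. mu m = w \<longleftrightarrow> mu w = m)"

definition blocking_pair ::
  "'p set \<Rightarrow> 'p set \<Rightarrow> ('q \<Rightarrow> 'q \<Rightarrow> real) \<Rightarrow> ('p \<Rightarrow> 'q) \<Rightarrow> ('p \<Rightarrow> 'p rel) \<Rightarrow> ('p \<Rightarrow> 'p) \<Rightarrow> 'p \<Rightarrow> 'p \<Rightarrow> bool" where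
  "blocking_pair M W d a T mu m w \<longleftrightarrow>
     m \<in> M \<and> w \<in> W \<and> prefers M W d a T m w (mu m) \<and> prefers M W d a T w m (mu w)"

definition stable_matching ::
  "'p set \<Rightarrow> 'p set \<Rightarrow> ('q \<Rightarrow> 'q \<Rightarrow> real) \<Rightarrow> ('p \<Rightarrow> 'q) \<Rightarrow> ('p \<Rightarrow> 'p rel) \<Rightarrow> ('p \<Rightarrow> 'p) \<Rightarrow> bool" where
  "stable_matching M W d a T mu \<longleftrightarrow>
     is_matching M W mu \<and> (\<nexists>m w. blocking_pair M W d a T mu m w)"

end

theory Submission
  imports Defs
begin

lemma ra_le: "ranks_above d a T x y z \<Longrightarrow> d (a x) (a y) \<le> d (a x) (a z)"
  unfolding ranks_above_def by auto

lemma ra_total: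
  assumes "total_on A (T x)" "y \<in> A" "z \<in> A" "y \<noteq> z" "\<not> ranks_above d a T x y z"
  shows "ranks_above d a T x z y"
  using assms unfolding ranks_above_def total_on_def by auto

lemma perfect:
  assumes fin: "finite M" "finite W" and disj: "M \<inter> W = {}" and cM: "card M = card W"
    and st: "stable_matching M W d a T mu"
  shows "(\<forall>m\<in>M. mu m \<in> W) \<and> (\<forall>w\<in>W. mu w \<in> M)"
proof -
  have im: "is_matching M W mu" and nb: "\<And>m w. \<not> blocking_pair M W d a T mu m w"
    using st unfolding stable_matching_def by auto
  have r1: "\<And>m. m \<in> M \<Longrightarrow> mu m \<in> W \<union> {m}"
    and r2: "\<And>w. w \<in> W \<Longrightarrow> mu w \<in> M \<union> {w}"
    and r3: "\<And>m w. m \<in> M \<Longrightarrow> w \<in> W \<Longrightarrow> mu m = w \<longleftrightarrow> mu w = m"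
    using im unfolding is_matching_def by auto
  define A where "A = {m\<in>M. mu m \<in> W}"
  define B where "B = {w\<in>W. mu w \<in> M}"
  have inj: "inj_on mu A"
    unfolding inj_on_def A_def by (metis (no_types, lifting) mem_Collect_eq r3)
  have img: "mu ` A = B"
  proof
    show "mu ` A \<subseteq> B" unfolding A_def B_def using r3 by fastforce
    show "B \<subseteq> mu ` A"
    proof
      fix w assume "w \<in> B"
      then have "w \<in> W" "mu w \<in> M" "mu (mu w) = w" unfolding B_def using r3 by auto
      then show "w \<in> mu ` A" unfolding A_def by (metis (mono_tags, lifting) image_eqI mem_Collect_eq)
    qed
  qed
  have cAB: "card A = card B" using card_image[OF inj] img by simp
  have men: "\<forall>m\<in>M. mu m \<in> W"
  proof (rule ccontr)
    assume "\<not> (\<forall>m\<in>M. mu m \<in> W)"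
    then obtain m0 where m0: "m0 \<in> M" "mu m0 \<notin> W" by auto
    then have mm0: "mu m0 = m0" using r1 by auto
    have "A \<subset> M" using m0 unfolding A_def by auto
    then have "card A < card M" using fin by (simp add: psubset_card_mono)
    then have "card B < card W" using cAB cM by simp
    then have "B \<noteq> W" by auto
    moreover have "B \<subseteq> W" unfolding B_def by auto
    ultimately obtain w where w: "w \<in> W" "w \<notin> B" by auto
    then have "mu w = w" using r2 unfolding B_def by auto
    moreover have "w \<notin> M" using w disj by auto
    ultimately have "blocking_pair M W d a T mu m0 w"
      unfolding blocking_pair_def prefers_def opposite_def using m0 w mm0 by auto
    then show False using nb by auto
  qed
  then have "A = M" unfolding A_def by auto
  then have "card B = card W" using cAB cM by simp
  moreover have "B \<subseteq> W" unfolding B_def by auto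
  ultimately have "B = W" using fin card_subset_eq by blast
  then show ?thesis using men unfolding B_def by auto
qed

locale two_stable =
  fixes M W :: "'p set" and d :: "'q \<Rightarrow> 'q \<Rightarrow> real" and a :: "'p \<Rightarrow> 'q"
    and T :: "'p \<Rightarrow> 'p rel" and mu1 mu2 :: "'p \<Rightarrow> 'p"
  assumes fin: "finite M" and disj: "M \<inter> W = {}"
    and totM: "\<forall>m\<in>M. total_on W (T m)" and totW: "\<forall>w\<in>W. total_on M (T w)"
    and sym: "\<And>p q. d p q = d q p"
    and p1M: "\<forall>m\<in>M. mu1 m \<in> W" and p1W: "\<forall>w\<in>W. mu1 w \<in> M"
    and p2M: "\<forall>m\<in>M. mu2 m \<in> W" and p2W: "\<forall>w\<in>W. mu2 w \<in> M"
    and i1: "\<forall>x\<in>M \<union> W. mu1 (mu1 x) = x"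
    and i2: "\<forall>x\<in>M \<union> W. mu2 (mu2 x) = x"
    and nb1: "\<And>m w. \<not> blocking_pair M W d a T mu1 m w"
    and nb2: "\<And>m w. \<not> blocking_pair M W d a T mu2 m w"
begin

definition S where "S = {m\<in>M. mu1 m \<noteq> mu2 m \<and> ranks_above d a T m (mu1 m) (mu2 m)}"
definition f where "f m = mu2 (mu1 m)"
definition D1 where "D1 x = d (a x) (a (mu1 x))"
definition D2 where "D2 x = d (a x) (a (mu2 x))"

lemma step:
  assumes "m \<in> S"
  shows "f m \<in> S" "D2 m \<ge> D1 m" "D1 m \<ge> D2 (f m)" "D1 (mu1 m) = D1 m" "D2 (mu1 m) = D2 (f m)"
proof -
  have mM: "m \<in> M" and mne: "mu1 m \<noteq> mu2 m" and mra: "ranks_above d a T m (mu1 m) (mu2 m)"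
    using assms unfolding S_def by auto
  define w where "w = mu1 m"
  have wW: "w \<in> W" using mM p1M unfolding w_def by auto
  have w1: "mu1 w = m" using mM i1 unfolding w_def by auto
  have wM: "w \<notin> M" using wW disj by auto
  have m2: "mu2 m \<in> W" using mM p2M by auto
  have wne: "w \<noteq> mu2 m" using mne unfolding w_def .
  have pr: "prefers M W d a T m w (mu2 m)"
    unfolding prefers_def opposite_def using mM m2 mra wW unfolding w_def by simp
  have "\<not> prefers M W d a T w m (mu2 w)" using nb2[of m w] pr mM wW unfolding blocking_pair_def by blast
  moreover have w2M: "mu2 w \<in> M" using wW p2W by auto
  moreover have "mu2 w \<noteq> w" using w2M wM by auto
  ultimately have nr: "\<not> ranks_above d a T w m (mu2 w)"
    unfolding prefers_def opposite_def using wM mM by simp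
  define m' where "m' = mu2 w"
  have m'M: "m' \<in> M" unfolding m'_def using w2M .
  have m'w: "mu2 m' = w" unfolding m'_def using i2 wW by auto
  have mm': "m' \<noteq> m" using m'w wne by auto
  have nr': "\<not> ranks_above d a T w m m'" using nr unfolding m'_def .
  have raw: "ranks_above d a T w m' m"
    using ra_total[of M T w m' m d a] totW wW m'M mM mm' nr' by auto
  have m1: "mu1 m' \<in> W" using m'M p1M by auto
  have prw: "prefers M W d a T w m' (mu1 w)"
    unfolding prefers_def opposite_def w1 using wM m'M mM raw by simp
  have "\<not> prefers M W d a T m' w (mu1 m')" using nb1[of m' w] prw m'M wW unfolding blocking_pair_def by blast
  then have nr2: "\<not> ranks_above d a T m' w (mu1 m')"
    unfolding prefers_def opposite_def using m'M wW m1 by simp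
  have ne: "mu1 m' \<noteq> w"
  proof
    assume "mu1 m' = w"
    then have "mu1 (mu1 m') = mu1 w" by simp
    then show False using i1 m'M w1 mm' by auto
  qed
  have ra2: "ranks_above d a T m' (mu1 m') w"
    using ra_total[of W T m' "mu1 m'" w d a] totM m'M m1 wW ne nr2 by auto
  have fm: "f m = m'" unfolding f_def m'_def w_def ..
  show "f m \<in> S" unfolding fm S_def using m'M ra2 ne m'w by auto
  show "D2 m \<ge> D1 m" using ra_le[OF mra] unfolding D1_def D2_def .
  have "d (a w) (a m') \<le> d (a w) (a m)" using ra_le[OF raw] .
  moreover have "D2 (f m) = d (a w) (a m')" unfolding D2_def fm m'w using sym by simp
  moreover have "D1 m = d (a w) (a m)" unfolding D1_def w_def[symmetric] using sym by simp
  ultimately show "D1 m \<ge> D2 (f m)" by simp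
  show "D1 (mu1 m) = D1 m" unfolding D1_def w_def[symmetric] w1 using sym by simp
  show "D2 (mu1 m) = D2 (f m)" unfolding D2_def fm w_def[symmetric] m'w m'_def[symmetric] using sym by simp
qed

lemma finS: "finite S" unfolding S_def using fin by auto

lemma injf: "inj_on f S"
proof (rule inj_onI)
  fix x y assume xS: "x \<in> S" and yS: "y \<in> S" and e: "f x = f y"
  have xM: "x \<in> M" and yM: "y \<in> M" using xS yS unfolding S_def by auto
  have x1: "mu1 x \<in> W" and y1: "mu1 y \<in> W" using xM yM p1M by auto
  have "mu2 (mu2 (mu1 x)) = mu2 (mu2 (mu1 y))" using e unfolding f_def by simp
  then have "mu1 x = mu1 y" using i2 x1 y1 by simp
  then have "mu1 (mu1 x) = mu1 (mu1 y)" by simp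
  then show "x = y" using i1 xM yM by simp
qed

lemma fS: "f ` S = S"
proof -
  have "f ` S \<subseteq> S" using step(1) by blast
  then show ?thesis using endo_inj_surj[OF finS _ injf] by blast
qed

lemma main:
  assumes mS: "m \<in> S"
  shows "D1 m = D2 m" "D1 (mu1 m) = D2 (mu1 m)" "D1 (mu2 m) = D2 (mu2 m)"
proof -
  have eqs: "sum D2 S = sum (D2 \<circ> f) S" using sum.reindex[OF injf, of D2] fS by simp
  have s0: "sum (\<lambda>x. D2 x - D2 (f x)) S = 0" using eqs by (simp add: sum_subtractf)
  have nn: "\<forall>x\<in>S. D2 x - D2 (f x) \<ge> 0"
  proof
    fix x assume xS: "x \<in> S"
    have a1: "D2 x \<ge> D1 x" by (rule step(2)[OF xS])
    have a2: "D1 x \<ge> D2 (f x)" by (rule step(3)[OF xS])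
    have "D2 (f x) \<le> D2 x" using order_trans[OF a2 a1] .
    then show "D2 x - D2 (f x) \<ge> 0" by (simp only: diff_ge_0_iff_ge)
  qed
  have z: "\<forall>x\<in>S. D2 x - D2 (f x) = 0" using sum_nonneg_eq_0_iff[OF finS, of "\<lambda>x. D2 x - D2 (f x)"] nn s0 by blast
  have all: "D1 x = D2 x \<and> D1 (mu1 x) = D2 (mu1 x)" if x: "x \<in> S" for x
  proof -
    have "D2 x - D2 (f x) = 0" using z x by blast
    then have e: "D2 x = D2 (f x)" by (simp only: diff_eq_eq add_0)
    have a1: "D2 x \<ge> D1 x" by (rule step(2)[OF x])
    have a2: "D1 x \<ge> D2 (f x)" by (rule step(3)[OF x])
    have a3: "D1 (mu1 x) = D1 x" by (rule step(4)[OF x])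
    have a4: "D2 (mu1 x) = D2 (f x)" by (rule step(5)[OF x])
    have a5: "D1 x = D2 x" using a1 a2 e by (intro antisym) simp_all
    have "D1 (mu1 x) = D2 (mu1 x)" unfolding a3 a4 a5 e ..
    then show ?thesis using a5 by (rule conjI[rotated])
  qed
  show "D1 m = D2 m" "D1 (mu1 m) = D2 (mu1 m)" using all[OF mS] by simp_all
  have "m \<in> f ` S" using fS mS by simp
  then obtain m0 where m0S: "m0 \<in> S" and m0: "m = f m0" by (rule imageE)
  have "m0 \<in> M" using m0S unfolding S_def by simp
  then have "mu1 m0 \<in> W" using p1M by simp
  then have "mu2 m = mu1 m0" unfolding m0 f_def using i2 by simp
  then show "D1 (mu2 m) = D2 (mu2 m)" using all[OF m0S] by simp
qed

end

lemma two_stable_swap: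
  assumes "two_stable M W d a T mu1 mu2" shows "two_stable M W d a T mu2 mu1"
  using assms unfolding two_stable_def by blast

lemma two_stable_all:
  assumes ts: "two_stable M W d a T mu1 mu2"
  shows "\<forall>x\<in>M \<union> W. d (a x) (a (mu1 x)) = d (a x) (a (mu2 x))"
proof
  interpret A: two_stable M W d a T mu1 mu2 by (rule ts)
  interpret B: two_stable M W d a T mu2 mu1 by (rule two_stable_swap[OF ts])
  have manX: "\<And>m. m \<in> M \<Longrightarrow> d (a m) (a (mu1 m)) = d (a m) (a (mu2 m)) \<and>
     d (a (mu1 m)) (a (mu1 (mu1 m))) = d (a (mu1 m)) (a (mu2 (mu1 m)))"
  proof -
    fix m assume m: "m \<in> M"
    show "?thesis m"
    proof (cases "mu1 m = mu2 m")
      case True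
      then show ?thesis using A.i1 A.i2 m A.p1M by (metis UnI1 UnI2)
    next
      case False
      have W: "mu1 m \<in> W" "mu2 m \<in> W" using m A.p1M A.p2M by auto
      have "ranks_above d a T m (mu1 m) (mu2 m) \<or> ranks_above d a T m (mu2 m) (mu1 m)"
        using ra_total[of W T m "mu1 m" "mu2 m" d a] A.totM m W False by auto
      then show ?thesis
      proof
        assume "ranks_above d a T m (mu1 m) (mu2 m)"
        then have "m \<in> A.S" unfolding A.S_def using m False by auto
        then show ?thesis using A.main[of m] unfolding A.D1_def A.D2_def by auto
      next
        assume "ranks_above d a T m (mu2 m) (mu1 m)"
        then have "m \<in> B.S" unfolding B.S_def using m False by auto
        then show ?thesis using B.main[of m] unfolding B.D1_def B.D2_def by auto
      qed
    qed
  qed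
  fix x assume x: "x \<in> M \<union> W"
  show "d (a x) (a (mu1 x)) = d (a x) (a (mu2 x))"
  proof (cases "x \<in> M")
    case True then show ?thesis using manX by auto
  next
    case False
    then have xW: "x \<in> W" using x by auto
    then have "mu1 x \<in> M" "mu1 (mu1 x) = x" using A.p1W A.i1 by auto
    then show ?thesis using manX[of "mu1 x"] by auto
  qed
qed

lemma hd_sym: "hamming_dist k p q = hamming_dist k q p"
  unfolding hamming_dist_def by (rule sum.cong) auto

lemma whd_sym: "weighted_hamming_dist k p q = weighted_hamming_dist k q p"
  unfolding weighted_hamming_dist_def by (rule sum.cong) auto

theorem lemma3p1:
  fixes M W :: "'p set" and n k :: nat
    and a :: "'p \<Rightarrow> (nat \<Rightarrow> bool)"
    and T :: "'p \<Rightarrow> 'p rel"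
    and d :: "(nat \<Rightarrow> bool) \<Rightarrow> (nat \<Rightarrow> bool) \<Rightarrow> real"
    and mu1 mu2 :: "'p \<Rightarrow> 'p"
  assumes "finite M" and "finite W" and "M \<inter> W = {}"
    and "card M = n" and "card W = n"
    and "k \<ge> 1"
    and "\<forall>m\<in>M. strict_linear_order_on W (T m)"
    and "\<forall>w\<in>W. strict_linear_order_on M (T w)"
    and "d = hamming_dist k \<or> d = weighted_hamming_dist k"
    and "stable_matching M W d a T mu1"
    and "stable_matching M W d a T mu2"
  shows "\<forall>x\<in>M \<union> W. d (a x) (a (mu1 x)) = d (a x) (a (mu2 x))"
proof -
  have dsym: "\<And>p q. d p q = d q p" using assms(9) hd_sym whd_sym by metis
  have cc: "card M = card W" using assms(4,5) by simp
  have P1: "(\<forall>m\<in>M. mu1 m \<in> W) \<and> (\<forall>w\<in>W. mu1 w \<in> M)"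
    using perfect[OF assms(1,2,3) cc assms(10)] .
  have P2: "(\<forall>m\<in>M. mu2 m \<in> W) \<and> (\<forall>w\<in>W. mu2 w \<in> M)"
    using perfect[OF assms(1,2,3) cc assms(11)] .
  have inv: "\<And>mu. stable_matching M W d a T mu \<Longrightarrow> (\<forall>m\<in>M. mu m \<in> W) \<and> (\<forall>w\<in>W. mu w \<in> M)
      \<Longrightarrow> \<forall>x\<in>M \<union> W. mu (mu x) = x"
    unfolding stable_matching_def is_matching_def by blast
  have st1: "\<And>m w. \<not> blocking_pair M W d a T mu1 m w" using assms(10) unfolding stable_matching_def by simp
  have st2: "\<And>m w. \<not> blocking_pair M W d a T mu2 m w" using assms(11) unfolding stable_matching_def by simp
  have tM: "\<forall>m\<in>M. total_on W (T m)" using assms(7) unfolding strict_linear_order_on_def by simp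
  have tW: "\<forall>w\<in>W. total_on M (T w)" using assms(8) unfolding strict_linear_order_on_def by simp
  have ts: "two_stable M W d a T mu1 mu2"
    apply unfold_locales
    using assms(1,3) P1 P2 inv[OF assms(10) P1] inv[OF assms(11) P2] st1 st2 tM tW
    apply simp_all
    apply (rule dsym)
    done
  show ?thesis by (rule two_stable_all[OF ts])
qed

end
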